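(* Let $R>0$, $\sqrt3R\le s<t\le2R$ and $3<q\le6$. Let $B:\mathbb{R}^3\to\mathbb{R}^3$ be smooth, set $$J_4=\frac{1}{(t-s)^2}\int_{B_t\setminus B_s}|B|^4\,dx,$$ and define $h(q)=1$ for $3<q<4$ and $h(q)=0$ for $4\le q\le6$. (i) For any $\delta>0$ there exist positive constants $C_\delta$ and $C$ (independent of $R,s,t,B$) such that $$J_4\le\delta\|B\|_{L^6(B_t\setminus B_s)}^2+\frac{C_\delta h(q)}{(t-s)^{\frac{6-q}{q-3}}}\|B\|_{L^q(A_R)}^{\frac{q}{q-3}}+\frac{C}{(t-s)^2}R^{3-\frac{12}{q}}\|B\|_{L^q(A_R)}^4.$$ (ii) There is $C>0$ (independent of $R,s,t,B$) such that $$J_4\le\frac{CR}{(t-s)^2}\|B\|_{L^6(A_R)}^4.$$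
   Context: For $r>0$, $B_r$ is the open ball of radius $r$ centered at the origin in $\mathbb{R}^3$, and $A_R=B_{2R}\setminus\overline{B_{3R/2}}$. *)

theory Defs
  imports "HOL-Analysis.Analysis"
begin

text \<open>C-infinity smoothness: f lies in a family of everywhere (Frechet) differentiable
functions that is closed under taking directional derivatives in every direction.\<close>
definition smooth :: "('a::euclidean_space \<Rightarrow> 'b::real_normed_vector) \<Rightarrow> bool" where
  "smooth f \<longleftrightarrow> (\<exists>F. f \<in> F \<and>
      (\<forall>g\<in>F. (\<forall>x. g differentiable (at x)) \<and>
              (\<forall>v. (\<lambda>x. frechet_derivative g (at x) v) \<in> F)))"

definition Lnorm :: "real \<Rightarrow> ('a::euclidean_space) set \<Rightarrow> ('a \<Rightarrow> 'b::real_normed_vector) \<Rightarrow> real" where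
  "Lnorm p S f = (LINT x:S|lebesgue. norm (f x) powr p) powr (1 / p)"

definition annulus :: "real \<Rightarrow> (real^3) set" where
  "annulus R = ball 0 (2*R) - cball 0 (3*R/2)"

definition J4 :: "real \<Rightarrow> real \<Rightarrow> (real^3 \<Rightarrow> real^3) \<Rightarrow> real" where
  "J4 s t B = (1 / (t - s)^2) * (LINT x:(ball 0 t - ball 0 s)|lebesgue. norm (B x) ^ 4)"

definition hq :: "real \<Rightarrow> real" where
  "hq q = (if 3 < q \<and> q < 4 then 1 else 0)"

end

theory Submission
  imports Defs
begin


lemma opt_aux:
  fixes p p' A B X :: real
  assumes p: "p > 1" "p' > 1" "1/p + 1/p' = 1" and AB: "A \<ge> 0" "B \<ge> 0"
    and H: "\<And>l. l > 0 \<Longrightarrow> X \<le> l powr p * A / p + l powr (-p') * B / p'"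
  shows "X \<le> A powr (1/p) * B powr (1/p')"
proof (cases "A > 0 \<and> B > 0")
  case True
  define l where "l = (B/A) powr (1/(p+p'))"
  have lpos: "l > 0" using True by (simp add: l_def)
  have pp: "p + p' = p * p'" using p by (simp add: field_simps)
  have e1: "p / (p + p') = 1/p'" using pp p by (simp add: field_simps)
  have e2: "- p' / (p + p') = -1/p" using pp p by (simp add: field_simps)
  have A1: "A = A powr (1/p) * A powr (1/p')" using True p by (simp add: powr_add[symmetric])
  have B1: "B = B powr (1/p) * B powr (1/p')" using True p by (simp add: powr_add[symmetric])
  have "l powr p = (B/A) powr (1/p')" unfolding l_def using e1 by (simp add: powr_powr)
  also have "\<dots> = B powr (1/p') / A powr (1/p')" using True by (simp add: powr_divide)
  finally have "l powr p * A = B powr (1/p') / A powr (1/p') * (A powr (1/p) * A powr (1/p'))"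
    using A1 by simp
  hence a: "l powr p * A = A powr (1/p) * B powr (1/p')" using True by simp
  have "l powr (-p') = (B/A) powr (-1/p)" unfolding l_def using e2 by (simp add: powr_powr)
  also have "\<dots> = A powr (1/p) / B powr (1/p)" using True
    by (simp add: powr_divide powr_minus_divide divide_simps)
  finally have "l powr (-p') * B = A powr (1/p) / B powr (1/p) * (B powr (1/p) * B powr (1/p'))"
    using B1 by simp
  hence b: "l powr (-p') * B = A powr (1/p) * B powr (1/p')" using True by simp
  have "X \<le> l powr p * A / p + l powr (-p') * B / p'" using H lpos by blast
  also have "\<dots> = A powr (1/p) * B powr (1/p') * (1/p + 1/p')"
    using a b by (simp add: field_simps)
  finally show ?thesis using p by simp
next
  case False
  hence z: "A = 0 \<or> B = 0" using AB by auto
  have "X \<le> 0"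
  proof (rule ccontr)
    assume "\<not> X \<le> 0" hence X: "X > 0" by simp
    show False
    proof (cases "A = 0")
      case True
      define l where "l = ((B+1)/(p'*X)) powr (1/p')"
      have lpos: "l > 0" using X p AB by (simp add: l_def)
      have "l powr (-p') = (p'*X)/(B+1)" unfolding l_def using X p AB
        by (simp add: powr_powr powr_minus_divide)
      hence "X \<le> (p'*X)/(B+1) * B / p'" using H[OF lpos] True by simp
      also have "\<dots> = X * (B/(B+1))" using p AB by simp
      also have "\<dots> < X" using X AB by (simp add: field_simps)
      finally show False by simp
    next
      case False
      hence B0: "B = 0" using z by simp
      define l where "l = ((p*X)/(A+1)) powr (1/p)"
      have lpos: "l > 0" using X p AB by (simp add: l_def)
      have "l powr p = (p*X)/(A+1)" unfolding l_def using X p AB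
        by (simp add: powr_powr)
      hence "X \<le> (p*X)/(A+1) * A / p" using H[OF lpos] B0 by simp
      also have "\<dots> = X * (A/(A+1))" using p AB by simp
      also have "\<dots> < X" using X AB by (simp add: field_simps)
      finally show False by simp
    qed
  qed
  thus ?thesis using z by auto
qed


lemma set_int_nonneg:
  fixes f :: "'a \<Rightarrow> real"
  assumes "\<And>x. x \<in> S \<Longrightarrow> f x \<ge> 0"
  shows "0 \<le> (LINT x:S|M. f x)"
  unfolding set_lebesgue_integral_def
  using assms by (auto intro!: integral_nonneg_AE AE_I2 simp: indicator_def)

lemma holder_set:
  fixes f g :: "'a::euclidean_space \<Rightarrow> real" and p p' :: real
  assumes p: "p > 1" "p' > 1" "1/p + 1/p' = 1"
    and fg: "\<And>x. f x \<ge> 0" "\<And>x. g x \<ge> 0"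
    and i1: "set_integrable lebesgue S (\<lambda>x. f x powr p)"
    and i2: "set_integrable lebesgue S (\<lambda>x. g x powr p')"
    and i3: "set_integrable lebesgue S (\<lambda>x. f x * g x)"
  shows "(LINT x:S|lebesgue. f x * g x) \<le>
     (LINT x:S|lebesgue. f x powr p) powr (1/p) * (LINT x:S|lebesgue. g x powr p') powr (1/p')"
proof (rule opt_aux[OF p])
  show "0 \<le> (LINT x:S|lebesgue. f x powr p)" by (rule set_int_nonneg) simp
  show "0 \<le> (LINT x:S|lebesgue. g x powr p')" by (rule set_int_nonneg) simp
  fix l :: real assume l: "l > 0"
  have pt: "f x * g x \<le> l powr p * f x powr p / p + l powr (-p') * g x powr p' / p'" for x
  proof -
    have "f x * g x = (l * f x) * (g x / l)" using l by simp
    also have "\<dots> \<le> (l * f x) powr p / p + (g x / l) powr p' / p'"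
      by (rule Youngs_inequality) (use p fg l in auto)
    also have "\<dots> = l powr p * f x powr p / p + l powr (-p') * g x powr p' / p'"
      using l fg by (simp add: powr_mult powr_divide powr_minus_divide)
    finally show ?thesis .
  qed
  have "(LINT x:S|lebesgue. f x * g x) \<le>
        (LINT x:S|lebesgue. (l powr p / p) * f x powr p + (l powr (-p') / p') * g x powr p')"
    by (rule set_integral_mono) (use i1 i2 i3 pt in \<open>auto simp: field_simps\<close>)
  also have "\<dots> = l powr p * (LINT x:S|lebesgue. f x powr p) / p
                 + l powr (-p') * (LINT x:S|lebesgue. g x powr p') / p'"
    using i1 i2 by (simp add: set_integral_add)
  finally show "(LINT x:S|lebesgue. f x * g x) \<le> l powr p * (LINT x:S|lebesgue. f x powr p) / p
                 + l powr (-p') * (LINT x:S|lebesgue. g x powr p') / p'" .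
qed


lemma set_int_subset_mono:
  fixes f :: "'a::euclidean_space \<Rightarrow> real"
  assumes "set_integrable lebesgue A f" "B \<in> sets lebesgue" "B \<subseteq> A"
    "\<And>x. x \<in> A \<Longrightarrow> f x \<ge> 0"
  shows "(LINT x:B|lebesgue. f x) \<le> (LINT x:A|lebesgue. f x)"
proof -
  have iB: "set_integrable lebesgue B f" using set_integrable_subset assms by blast
  show ?thesis unfolding set_lebesgue_integral_def
    apply (rule integral_mono)
    using iB assms(1) apply (simp_all add: set_integrable_def)
    using assms(3,4) by (auto simp: indicator_def)
qed

lemma cont_set_integrable:
  fixes h :: "'a::euclidean_space \<Rightarrow> real"
  assumes "continuous_on UNIV h" "bounded S" "S \<in> sets lebesgue"
  shows "set_integrable lebesgue S h"
proof -
  obtain a b where ab: "S \<subseteq> cbox a b" using assms(2) bounded_subset_cbox_symmetric by blast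
  have "h absolutely_integrable_on cbox a b"
    by (rule absolutely_integrable_continuous) (use assms(1) continuous_on_subset in blast)
  then show ?thesis using set_integrable_subset ab assms(3) by blast
qed

lemma smooth_cont:
  assumes "smooth (B :: 'a::euclidean_space \<Rightarrow> 'b::real_normed_vector)"
  shows "continuous_on UNIV B"
proof -
  from assms obtain F where "B \<in> F" "\<forall>g\<in>F. (\<forall>x. g differentiable (at x))"
    unfolding smooth_def by blast
  hence "\<forall>x. B differentiable (at x)" by blast
  thus ?thesis by (simp add: continuous_at_imp_continuous_on differentiable_imp_continuous_within)
qed

lemma cont_norm_powr:
  fixes B :: "'a::euclidean_space \<Rightarrow> 'b::real_normed_vector"
  assumes "continuous_on UNIV B" "r > 0"
  shows "continuous_on UNIV (\<lambda>x. norm (B x) powr r)"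
  using assms by (auto intro!: continuous_intros continuous_on_powr')

lemma sets_S: "(ball (0::real^3) t - ball 0 s) \<in> sets lebesgue"
  by auto

lemma sets_ann: "annulus R \<in> sets lebesgue"
  unfolding annulus_def by auto

lemma meas_S:
  assumes "R > 0" "S \<subseteq> ball (0::real^3) (2*R)" "S \<in> sets lebesgue"
  shows "measure lebesgue S \<le> unit_ball_vol 3 * 8 * R^3"
proof -
  have "measure lebesgue S \<le> measure lebesgue (ball (0::real^3) (2*R))"
    by (rule measure_mono_fmeasurable) (use assms in auto)
  also have "\<dots> = unit_ball_vol 3 * (2*R)^3"
    using content_ball[of "2*R" "0::real^3"] assms by simp
  finally show ?thesis by (simp add: power_mult_distrib)
qed



lemma pow_powr: "(y::real) \<ge> 0 \<Longrightarrow> n > 0 \<Longrightarrow> y ^ n = y powr (real n)"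
  by (cases "y = 0") (auto simp: powr_realpow)

lemma sqrt3_gt: "sqrt 3 > (3/2::real)"
  by (rule real_less_rsqrt) (simp add: power2_eq_square)

lemma geom:
  assumes "R > 0" "sqrt 3 * R \<le> s" "s < t" "t \<le> 2 * R"
  shows "ball (0::real^3) t - ball 0 s \<subseteq> annulus R"
    "ball (0::real^3) t - ball 0 s \<subseteq> ball 0 (2*R)"
    "bounded (ball (0::real^3) t - ball 0 s)" "bounded (annulus R)"
proof -
  have "3/2 * R < s" using sqrt3_gt assms(1,2) by (smt (verit) mult_strict_right_mono)
  thus "ball (0::real^3) t - ball 0 s \<subseteq> annulus R"
    using assms unfolding annulus_def by (auto simp: dist_norm)
  show "ball (0::real^3) t - ball 0 s \<subseteq> ball 0 (2*R)" using assms by auto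
  show "bounded (ball (0::real^3) t - ball 0 s)" by (meson bounded_ball bounded_subset Diff_subset)
  show "bounded (annulus R)" unfolding annulus_def by (meson bounded_ball bounded_subset Diff_subset)
qed

lemma intg:
  assumes "smooth B" "r > 0" "bounded S" "S \<in> sets lebesgue"
  shows "set_integrable lebesgue S (\<lambda>x::real^3. norm ((B::real^3\<Rightarrow>real^3) x) powr r)"
  by (rule cont_set_integrable[OF cont_norm_powr[OF smooth_cont[OF assms(1)] assms(2)] assms(3,4)])

definition cvol :: real where "cvol = unit_ball_vol 3 * 8"

lemma cvol_pos: "cvol > 0" unfolding cvol_def by simp

lemma J4_int:
  "J4 s t B = (1 / (t - s)^2) * (LINT x:(ball 0 t - ball 0 s)|lebesgue. norm (B x) powr 4)"
proof -
  have "(LINT x:(ball 0 t - ball 0 s)|lebesgue. norm (B x) ^ 4) =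
        (LINT x:(ball 0 t - ball 0 s)|lebesgue. norm (B x) powr 4)"
  proof -
    have "\<And>x. norm (B x) ^ 4 = norm (B x) powr 4" using pow_powr[of "norm (B _)" 4] by simp
    thus ?thesis by (simp only:)
  qed
  thus ?thesis unfolding J4_def by simp
qed

lemma part2:
  assumes "R > 0" "sqrt 3 * R \<le> s" "s < t" "t \<le> 2 * R" "smooth B"
  shows "J4 s t B \<le> cvol powr (1/3) * R / (t - s)^2 * (Lnorm 6 (annulus R) B)^4"
proof -
  note g = geom[OF assms(1-4)]
  define S where "S = ball (0::real^3) t - ball 0 s"
  have Ss: "S \<in> sets lebesgue" unfolding S_def by auto
  have bS: "bounded S" using g S_def by simp
  define u where "u x = norm (B x)" for x
  have u0: "u x \<ge> 0" for x unfolding u_def by simp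
  define I6S where "I6S = (LINT x:S|lebesgue. u x powr 6)"
  define I6A where "I6A = (LINT x:annulus R|lebesgue. u x powr 6)"
  have fm: "S \<in> fmeasurable lebesgue"
    using bounded_set_imp_lmeasurable bS Ss by blast
  have V: "measure lebesgue S \<le> cvol * R^3"
    unfolding cvol_def using meas_S[OF assms(1) _ Ss] g S_def by simp
  have i4: "set_integrable lebesgue S (\<lambda>x. u x powr 4)"
    unfolding u_def by (rule intg[OF assms(5) _ bS Ss]) simp
  have "(LINT x:S|lebesgue. u x powr 4 * 1) \<le>
     (LINT x:S|lebesgue. (u x powr 4) powr (3/2)) powr (1/(3/2)) * (LINT x:S|lebesgue. (1::real) powr 3) powr (1/3)"
  proof (rule holder_set)
    show "set_integrable lebesgue S (\<lambda>x. (u x powr 4) powr (3/2))"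
    proof -
      have e: "(\<lambda>x. (u x powr 4) powr (3/2)) = (\<lambda>x. u x powr 6)"
        by (rule ext) (simp only: powr_powr, simp)
      show ?thesis unfolding e unfolding u_def by (rule intg[OF assms(5) _ bS Ss]) simp
    qed
    show "set_integrable lebesgue S (\<lambda>x. (1::real) powr 3)"
      by (rule cont_set_integrable[OF continuous_on_const bS Ss])
  qed (use i4 u0 in auto)
  also have "\<dots> = I6S powr (2/3) * (measure lebesgue S) powr (1/3)"
  proof -
    have m1: "(LINT x:S|lebesgue. (1::real)) = measure lebesgue S"
      using set_integral_const[of S lebesgue "1::real"] fm by (auto simp: fmeasurable_def)
    show ?thesis by (simp add: powr_powr I6S_def m1)
  qed
  also have "\<dots> \<le> I6A powr (2/3) * (cvol * R^3) powr (1/3)"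
  proof (rule mult_mono)
    have "I6S \<le> I6A" unfolding I6S_def I6A_def
      by (rule set_int_subset_mono) (use intg[OF assms(5) _ g(4) sets_ann, of 6] g Ss S_def u_def in auto)
    moreover have "I6S \<ge> 0" unfolding I6S_def by (rule set_int_nonneg) (simp add: u0)
    ultimately show "I6S powr (2/3) \<le> I6A powr (2/3)" by (simp add: powr_mono2)
    show "measure lebesgue S powr (1/3) \<le> (cvol * R^3) powr (1/3)"
      using V by (simp add: powr_mono2)
  qed simp_all
  also have "(cvol * R^3) powr (1/3) = cvol powr (1/3) * R"
  proof -
    have r3: "R^3 = R powr 3" using assms(1) by (simp add: powr_realpow)
    have "(R^3) powr (1/3) = R" unfolding r3 by (simp only: powr_powr) (use assms(1) in simp)
    thus ?thesis using assms(1) cvol_pos by (simp add: powr_mult)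
  qed
  also have "I6A powr (2/3) = (Lnorm 6 (annulus R) B)^4"
  proof -
    have "I6A \<ge> 0" unfolding I6A_def by (rule set_int_nonneg) (simp add: u0)
    have "(I6A powr (1/6))^4 = (I6A powr (1/6)) powr 4"
      using pow_powr[of "I6A powr (1/6)" 4] by simp
    also have "\<dots> = I6A powr (2/3)" by (simp only: powr_powr) simp
    finally have "(I6A powr (1/6))^4 = I6A powr (2/3)" .
    thus ?thesis unfolding Lnorm_def I6A_def u_def by simp
  qed
  finally have "(LINT x:S|lebesgue. u x powr 4) \<le> cvol powr (1/3) * R * (Lnorm 6 (annulus R) B)^4"
    by (simp only: mult_1_right mult_1_left mult_ac)
  hence K: "(LINT x:S|lebesgue. u x powr 4) \<le> cvol powr (1/3) * R * (Lnorm 6 (annulus R) B)^4" .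
  have "J4 s t B = (1/(t-s)^2) * (LINT x:S|lebesgue. u x powr 4)"
    unfolding J4_int S_def u_def ..
  also have "\<dots> \<le> (1/(t-s)^2) * (cvol powr (1/3) * R * (Lnorm 6 (annulus R) B)^4)"
    by (rule mult_left_mono[OF K]) simp
  also have "\<dots> = cvol powr (1/3) * R / (t - s)^2 * (Lnorm 6 (annulus R) B)^4"
    by simp
  finally show ?thesis .
qed



lemma powr_pow_gen: "n > 0 \<Longrightarrow> ((x::real) powr a)^n = x powr (a * real n)"
proof -
  assume n: "n > 0"
  have "(x powr a)^n = (x powr a) powr (real n)" by (rule pow_powr[OF _ n]) simp
  also have "\<dots> = x powr (a * real n)" by (rule powr_powr)
  finally show ?thesis .
qed

lemma R3_powr: "R > 0 \<Longrightarrow> ((R::real)^3) powr e = R powr (3 * e)"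
proof -
  assume R: "R > 0"
  have r3: "R^3 = R powr 3" using R by (simp add: powr_realpow)
  show ?thesis unfolding r3 by (rule powr_powr)
qed

lemma part1_ge4:
  assumes "R > 0" "sqrt 3 * R \<le> s" "s < t" "t \<le> 2 * R" "smooth B" "4 \<le> q"
  shows "J4 s t B \<le> cvol powr (1 - 4/q) / (t - s)^2 * R powr (3 - 12/q) * (Lnorm q (annulus R) B)^4"
proof -
  note g = geom[OF assms(1-4)]
  define S where "S = ball (0::real^3) t - ball 0 s"
  have Ss: "S \<in> sets lebesgue" unfolding S_def by auto
  have bS: "bounded S" using g S_def by simp
  define u where "u x = norm (B x)" for x
  have u0: "u x \<ge> 0" for x unfolding u_def by simp
  define IqS where "IqS = (LINT x:S|lebesgue. u x powr q)"
  define IqA where "IqA = (LINT x:annulus R|lebesgue. u x powr q)"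
  define I4 where "I4 = (LINT x:S|lebesgue. u x powr 4)"
  have q0: "q > 0" using assms(6) by simp
  have fm: "S \<in> fmeasurable lebesgue"
    using bounded_set_imp_lmeasurable bS Ss by blast
  have V: "measure lebesgue S \<le> cvol * R^3"
    unfolding cvol_def using meas_S[OF assms(1) _ Ss] g S_def by simp
  have i4: "set_integrable lebesgue S (\<lambda>x. u x powr 4)"
    unfolding u_def by (rule intg[OF assms(5) _ bS Ss]) simp
  have IqA0: "IqA \<ge> 0" unfolding IqA_def by (rule set_int_nonneg) (simp add: u0)
  have IqS0: "IqS \<ge> 0" unfolding IqS_def by (rule set_int_nonneg) (simp add: u0)
  have SA: "IqS \<le> IqA" unfolding IqS_def IqA_def
    by (rule set_int_subset_mono) (use intg[OF assms(5) q0 g(4) sets_ann] g Ss S_def u_def in auto)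
  have cR: "cvol * R^3 > 0" using cvol_pos assms(1) by simp
  have main: "I4 \<le> IqA powr (4/q) * (cvol * R^3) powr (1 - 4/q)"
  proof (cases "q = 4")
    case True
    have "I4 = IqS" unfolding I4_def IqS_def True ..
    also have "\<dots> \<le> IqA" by (rule SA)
    also have "\<dots> = IqA powr (4/q) * (cvol * R^3) powr (1 - 4/q)"
      using True IqA0 cR cvol_pos assms(1) by (simp add: powr_one)
    finally show ?thesis .
  next
    case False
    hence q4: "q > 4" using assms(6) by simp
    have "(LINT x:S|lebesgue. u x powr 4 * 1) \<le>
       (LINT x:S|lebesgue. (u x powr 4) powr (q/4)) powr (1/(q/4))
       * (LINT x:S|lebesgue. (1::real) powr (q/(q-4))) powr (1/(q/(q-4)))"
    proof (rule holder_set)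
      show "set_integrable lebesgue S (\<lambda>x. (u x powr 4) powr (q/4))"
      proof -
        have e: "(\<lambda>x. (u x powr 4) powr (q/4)) = (\<lambda>x. u x powr q)"
          by (rule ext) (simp only: powr_powr, simp)
        show ?thesis unfolding e unfolding u_def by (rule intg[OF assms(5) q0 bS Ss])
      qed
      show "set_integrable lebesgue S (\<lambda>x. (1::real) powr (q/(q-4)))"
        by (rule cont_set_integrable[OF continuous_on_const bS Ss])
      show "1 / (q / 4) + 1 / (q / (q - 4)) = 1" using q4 by (simp add: field_simps)
    qed (use i4 u0 q4 in auto)
    also have "\<dots> = IqS powr (4/q) * (measure lebesgue S) powr ((q-4)/q)"
    proof -
      have m1: "(LINT x:S|lebesgue. (1::real)) = measure lebesgue S"
        using set_integral_const[of S lebesgue "1::real"] fm by (auto simp: fmeasurable_def)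
      have e: "(\<lambda>x. (u x powr 4) powr (q/4)) = (\<lambda>x. u x powr q)"
        by (rule ext) (simp only: powr_powr, simp)
      show ?thesis unfolding e by (simp add: IqS_def m1)
    qed
    also have "\<dots> \<le> IqA powr (4/q) * (cvol * R^3) powr ((q-4)/q)"
      by (rule mult_mono) (use SA IqS0 V q4 in \<open>auto intro: powr_mono2\<close>)
    also have "(q-4)/q = 1 - 4/q" using q4 by (simp add: field_simps)
    finally show ?thesis unfolding I4_def by (simp only: mult_1_right)
  qed
  also have "(cvol * R^3) powr (1 - 4/q) = cvol powr (1 - 4/q) * R powr (3 - 12/q)"
    using assms(1) by (simp add: powr_mult R3_powr algebra_simps)
  also have "IqA powr (4/q) = (Lnorm q (annulus R) B)^4"
    unfolding Lnorm_def IqA_def u_def using powr_pow_gen[of 4 _ "1/q"] by simp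
  finally have K: "I4 \<le> cvol powr (1 - 4/q) * R powr (3 - 12/q) * (Lnorm q (annulus R) B)^4"
    by (simp only: mult_ac)
  have "J4 s t B = (1/(t-s)^2) * I4"
    unfolding J4_int S_def u_def I4_def ..
  also have "\<dots> \<le> (1/(t-s)^2) * (cvol powr (1 - 4/q) * R powr (3 - 12/q) * (Lnorm q (annulus R) B)^4)"
    by (rule mult_left_mono[OF K]) simp
  also have "\<dots> = cvol powr (1 - 4/q) / (t - s)^2 * R powr (3 - 12/q) * (Lnorm q (annulus R) B)^4"
    by simp
  finally show ?thesis .
qed



definition betaq :: "real \<Rightarrow> real" where "betaq q = 3 * (4 - q) / (6 - q)"
definition Cd :: "real \<Rightarrow> real \<Rightarrow> real" where
  "Cd q d = (1 - betaq q) * (d / betaq q) powr (- betaq q / (1 - betaq q))"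

lemma Cd_pos: "3 < q \<Longrightarrow> q < 4 \<Longrightarrow> d > 0 \<Longrightarrow> Cd q d > 0"
  unfolding Cd_def betaq_def by (simp add: field_simps)

lemma young_step:
  fixes X Y d \<beta> :: real
  assumes "0 < \<beta>" "\<beta> < 1" "X \<ge> 0" "Y \<ge> 0" "d > 0"
  shows "Y * X powr \<beta> \<le> d * \<beta> * X + (1 - \<beta>) * d powr (- \<beta> / (1 - \<beta>)) * Y powr (1 / (1 - \<beta>))"
proof -
  define a1 where "a1 = (d * X) powr \<beta>"
  define b1 where "b1 = Y * d powr (-\<beta>)"
  have "a1 * b1 = Y * X powr \<beta> * (d powr \<beta> * d powr (-\<beta>))"
    unfolding a1_def b1_def by (simp add: powr_mult mult_ac)
  also have "d powr \<beta> * d powr (-\<beta>) = 1" using assms(5) by (simp add: powr_add[symmetric])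
  finally have ab: "a1 * b1 = Y * X powr \<beta>" by simp
  have "a1 * b1 \<le> a1 powr (1/\<beta>) / (1/\<beta>) + b1 powr (1/(1-\<beta>)) / (1/(1-\<beta>))"
    by (rule Youngs_inequality) (use assms in \<open>auto simp: a1_def b1_def field_simps\<close>)
  also have "a1 powr (1/\<beta>) = d * X"
    unfolding a1_def using assms by (simp add: powr_powr powr_one)
  also have "b1 powr (1/(1-\<beta>)) = Y powr (1 / (1 - \<beta>)) * d powr (- \<beta> / (1 - \<beta>))"
    unfolding b1_def by (simp add: powr_mult powr_powr)
  finally show ?thesis using ab assms by (simp add: field_simps)
qed



lemma part1_lt4:
  assumes "R > 0" "sqrt 3 * R \<le> s" "s < t" "t \<le> 2 * R" "smooth B" "3 < q" "q < 4" "\<delta> > 0"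
  shows "J4 s t B \<le> \<delta> * (Lnorm 6 (ball 0 t - ball 0 s) B)^2
      + Cd q \<delta> / (t - s) powr ((6 - q) / (q - 3)) * (Lnorm q (annulus R) B) powr (q / (q - 3))"
proof -
  note g = geom[OF assms(1-4)]
  define S where "S = ball (0::real^3) t - ball 0 s"
  have Ss: "S \<in> sets lebesgue" unfolding S_def by auto
  have bS: "bounded S" using g S_def by simp
  define u where "u x = norm (B x)" for x
  have u0: "u x \<ge> 0" for x unfolding u_def by simp
  define IqS where "IqS = (LINT x:S|lebesgue. u x powr q)"
  define IqA where "IqA = (LINT x:annulus R|lebesgue. u x powr q)"
  define I6S where "I6S = (LINT x:S|lebesgue. u x powr 6)"
  define I4 where "I4 = (LINT x:S|lebesgue. u x powr 4)"
  have q0: "q > 0" using assms(6) by simp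
  have i4: "set_integrable lebesgue S (\<lambda>x. u x powr 4)"
    unfolding u_def by (rule intg[OF assms(5) _ bS Ss]) simp
  have IqA0: "IqA \<ge> 0" unfolding IqA_def by (rule set_int_nonneg) (simp add: u0)
  have IqS0: "IqS \<ge> 0" unfolding IqS_def by (rule set_int_nonneg) (simp add: u0)
  have I6S0: "I6S \<ge> 0" unfolding I6S_def by (rule set_int_nonneg) (simp add: u0)
  have SA: "IqS \<le> IqA" unfolding IqS_def IqA_def
    by (rule set_int_subset_mono) (use intg[OF assms(5) q0 g(4) sets_ann] g Ss S_def u_def in auto)
  define a where "a = 2*q/(6-q)"
  define b where "b = 6*(4-q)/(6-q)"
  define p where "p = (6-q)/2"
  define p' where "p' = (6-q)/(4-q)"
  have nz: "6 - q \<noteq> 0" using assms(7) by simp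
  have nz4: "4 - q \<noteq> 0" using assms(7) by simp
  have nz3: "q - 3 \<noteq> 0" "2*q - 6 \<noteq> 0" using assms(6) by simp_all
  have "a + b = (2*q + 6*(4-q))/(6-q)" unfolding a_def b_def by (rule add_divide_distrib[symmetric])
  also have "\<dots> = 4*(6-q)/(6-q)" by (simp add: algebra_simps)
  also have "\<dots> = 4" using nz by (rule nonzero_mult_div_cancel_right)
  finally have ab: "a + b = 4" .
  have ap: "a * p = q" unfolding a_def p_def using assms(6,7) nz nz4 nz3 by (simp add: divide_simps; simp add: algebra_simps)
  have bp: "b * p' = 6" unfolding b_def p'_def using assms(6,7) nz nz4 nz3 by (simp add: divide_simps; simp add: algebra_simps)
  have e1: "(\<lambda>x. u x powr a * u x powr b) = (\<lambda>x. u x powr 4)"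
    by (rule ext) (simp only: powr_add[symmetric] ab)
  have e2: "(\<lambda>x. (u x powr a) powr p) = (\<lambda>x. u x powr q)"
    by (rule ext) (simp only: powr_powr ap)
  have e3: "(\<lambda>x. (u x powr b) powr p') = (\<lambda>x. u x powr 6)"
    by (rule ext) (simp only: powr_powr bp)
  have "(LINT x:S|lebesgue. u x powr a * u x powr b) \<le>
     (LINT x:S|lebesgue. (u x powr a) powr p) powr (1/p)
       * (LINT x:S|lebesgue. (u x powr b) powr p') powr (1/p')"
  proof (rule holder_set)
    show "set_integrable lebesgue S (\<lambda>x. (u x powr a) powr p)"
      unfolding e2 unfolding u_def by (rule intg[OF assms(5) q0 bS Ss])
    show "set_integrable lebesgue S (\<lambda>x. (u x powr b) powr p')"
      unfolding e3 unfolding u_def by (rule intg[OF assms(5) _ bS Ss]) simp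
    show "set_integrable lebesgue S (\<lambda>x. u x powr a * u x powr b)"
      unfolding e1 by (rule i4)
    show "1 < p" unfolding p_def using assms(6,7) by simp
    have "4 - q > 0" "6 - q > 4 - q" using assms(7) by auto
    thus "1 < p'" unfolding p'_def by (simp add: divide_simps)
    show "1/p + 1/p' = 1" unfolding p_def p'_def using assms(6,7) nz nz4 nz3
      by (simp add: divide_simps; simp add: algebra_simps)
  qed (use u0 in auto)
  hence H: "I4 \<le> IqS powr (2/(6-q)) * I6S powr ((4-q)/(6-q))"
    unfolding e1 e2 e3 unfolding I4_def IqS_def I6S_def p_def p'_def by simp
  define X where "X = I6S powr (1/3)"
  define Y where "Y = IqA powr (2/(6-q)) / (t-s)^2"
  define \<beta> where "\<beta> = betaq q"
  have pos6: "6 - q > 0" using assms(7) by simp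
  have \<beta>: "0 < \<beta>" "\<beta> < 1" unfolding \<beta>_def betaq_def using assms(6,7) pos6
    by (simp_all add: divide_simps)
  have X0: "X \<ge> 0" unfolding X_def by simp
  have Y0: "Y \<ge> 0" unfolding Y_def by simp
  have XL: "X = (Lnorm 6 (ball 0 t - ball 0 s) B)^2"
    unfolding X_def Lnorm_def I6S_def S_def u_def using powr_pow_gen[of 2 _ "1/6"] by simp
  have I6X: "I6S powr ((4-q)/(6-q)) = X powr \<beta>"
  proof -
    have "1/3 * (3 * (4 - q) / (6 - q)) = (4 - q) / (6 - q)" using pos6
      by (simp add: divide_simps; simp add: algebra_simps)
    thus ?thesis unfolding X_def \<beta>_def betaq_def by (simp only: powr_powr)
  qed
  have "J4 s t B = (1/(t-s)^2) * I4"
    unfolding J4_int S_def u_def I4_def ..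
  also have "\<dots> \<le> (1/(t-s)^2) * (IqA powr (2/(6-q)) * I6S powr ((4-q)/(6-q)))"
  proof (rule mult_left_mono)
    show "I4 \<le> IqA powr (2/(6-q)) * I6S powr ((4-q)/(6-q))"
      using H mult_right_mono[OF powr_mono2[OF _ IqS0 SA], of "2/(6-q)" "I6S powr ((4-q)/(6-q))"]
        assms(6,7) by simp
  qed simp
  also have "\<dots> = Y * X powr \<beta>" unfolding Y_def I6X by simp
  also have "\<dots> \<le> (\<delta>/\<beta>) * \<beta> * X + (1 - \<beta>) * (\<delta>/\<beta>) powr (- \<beta> / (1 - \<beta>)) * Y powr (1 / (1 - \<beta>))"
    by (rule young_step) (use \<beta> X0 Y0 assms(8) in auto)
  also have "(\<delta>/\<beta>) * \<beta> * X = \<delta> * (Lnorm 6 (ball 0 t - ball 0 s) B)^2"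
    using \<beta> XL by simp
  also have "(1 - \<beta>) * (\<delta>/\<beta>) powr (- \<beta> / (1 - \<beta>)) = Cd q \<delta>"
    unfolding Cd_def \<beta>_def ..
  also have "Y powr (1 / (1 - \<beta>)) = 1 / (t - s) powr ((6 - q) / (q - 3)) * (Lnorm q (annulus R) B) powr (q / (q - 3))"
  proof -
    have om: "1 / (1 - \<beta>) = (6-q)/(2*q-6)" unfolding \<beta>_def betaq_def using assms(6,7)
      by (simp add: divide_simps; simp add: algebra_simps)
    have ts: "((t-s)^2) powr (1 / (1 - \<beta>)) = (t-s) powr ((6 - q) / (q - 3))"
    proof -
      have "((t-s)^2) powr (1 / (1 - \<beta>)) = ((t-s) powr 2) powr (1 / (1 - \<beta>))"
        using assms(3) by (simp add: powr_realpow)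
      also have "\<dots> = (t-s) powr (2 * (1 / (1 - \<beta>)))" by (rule powr_powr)
      also have "2 * (1 / (1 - \<beta>)) = (6 - q) / (q - 3)" unfolding om using assms(6,7) nz nz4 nz3
        by (simp add: divide_simps; simp add: algebra_simps)
      finally show ?thesis .
    qed
    have iq: "(IqA powr (2/(6-q))) powr (1 / (1 - \<beta>)) = (Lnorm q (annulus R) B) powr (q / (q - 3))"
    proof -
      have "(IqA powr (2/(6-q))) powr (1 / (1 - \<beta>)) = IqA powr ((2/(6-q)) * (1 / (1 - \<beta>)))"
        by (rule powr_powr)
      also have "(2/(6-q)) * (1 / (1 - \<beta>)) = (1/q) * (q / (q - 3))" unfolding om using assms(6,7) nz nz4 nz3
        by (simp add: divide_simps; simp add: algebra_simps)
      also have "IqA powr \<dots> = (Lnorm q (annulus R) B) powr (q / (q - 3))"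
        unfolding Lnorm_def IqA_def u_def by (rule powr_powr[symmetric])
      finally show ?thesis .
    qed
    show ?thesis unfolding Y_def using iq ts assms(3) by (simp add: powr_divide)
  qed
  finally show ?thesis by simp
qed



lemma Lnorm_nonneg: "Lnorm p S f \<ge> 0" unfolding Lnorm_def by simp

theorem lemma2p7:
  shows "(\<forall>q::real. 3 < q \<and> q \<le> 6 \<longrightarrow>
           (\<exists>C>0. \<forall>\<delta>>0. \<exists>C\<delta>>0. \<forall>(R::real) s t (B::real^3 \<Rightarrow> real^3).
              R > 0 \<and> sqrt 3 * R \<le> s \<and> s < t \<and> t \<le> 2 * R \<and> smooth B \<longrightarrow>
              J4 s t B \<le> \<delta> * (Lnorm 6 (ball 0 t - ball 0 s) B)^2
                + C\<delta> * hq q / (t - s) powr ((6 - q) / (q - 3))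
                    * (Lnorm q (annulus R) B) powr (q / (q - 3))
                + C / (t - s)^2 * R powr (3 - 12 / q) * (Lnorm q (annulus R) B)^4))
       \<and> (\<exists>C>0. \<forall>(R::real) s t (B::real^3 \<Rightarrow> real^3).
              R > 0 \<and> sqrt 3 * R \<le> s \<and> s < t \<and> t \<le> 2 * R \<and> smooth B \<longrightarrow>
              J4 s t B \<le> C * R / (t - s)^2 * (Lnorm 6 (annulus R) B)^4)"
proof (intro conjI allI impI)
  show "\<exists>C>0. \<forall>(R::real) s t (B::real^3 \<Rightarrow> real^3).
              R > 0 \<and> sqrt 3 * R \<le> s \<and> s < t \<and> t \<le> 2 * R \<and> smooth B \<longrightarrow>
              J4 s t B \<le> C * R / (t - s)^2 * (Lnorm 6 (annulus R) B)^4"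
    by (rule exI[of _ "cvol powr (1/3)"]) (use cvol_pos part2 in auto)
next
  fix q :: real assume q: "3 < q \<and> q \<le> 6"
  show "\<exists>C>0. \<forall>\<delta>>0. \<exists>C\<delta>>0. \<forall>(R::real) s t (B::real^3 \<Rightarrow> real^3).
              R > 0 \<and> sqrt 3 * R \<le> s \<and> s < t \<and> t \<le> 2 * R \<and> smooth B \<longrightarrow>
              J4 s t B \<le> \<delta> * (Lnorm 6 (ball 0 t - ball 0 s) B)^2
                + C\<delta> * hq q / (t - s) powr ((6 - q) / (q - 3))
                    * (Lnorm q (annulus R) B) powr (q / (q - 3))
                + C / (t - s)^2 * R powr (3 - 12 / q) * (Lnorm q (annulus R) B)^4"
  proof (cases "q < 4")
    case True
    have h: "hq q = 1" using q True by (simp add: hq_def)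
    show ?thesis
    proof (rule exI[of _ 1], intro conjI allI impI)
      fix \<delta> :: real assume d: "\<delta> > 0"
      show "\<exists>C\<delta>>0. \<forall>(R::real) s t (B::real^3 \<Rightarrow> real^3).
              R > 0 \<and> sqrt 3 * R \<le> s \<and> s < t \<and> t \<le> 2 * R \<and> smooth B \<longrightarrow>
              J4 s t B \<le> \<delta> * (Lnorm 6 (ball 0 t - ball 0 s) B)^2
                + C\<delta> * hq q / (t - s) powr ((6 - q) / (q - 3))
                    * (Lnorm q (annulus R) B) powr (q / (q - 3))
                + 1 / (t - s)^2 * R powr (3 - 12 / q) * (Lnorm q (annulus R) B)^4"
      proof (rule exI[of _ "Cd q \<delta>"], intro conjI allI impI)
        show "Cd q \<delta> > 0" using Cd_pos q True d by simp
        fix R s t :: real and B :: "real^3 \<Rightarrow> real^3"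
        assume a: "R > 0 \<and> sqrt 3 * R \<le> s \<and> s < t \<and> t \<le> 2 * R \<and> smooth B"
        have A: "J4 s t B \<le> \<delta> * (Lnorm 6 (ball 0 t - ball 0 s) B)^2
           + Cd q \<delta> / (t - s) powr ((6 - q) / (q - 3)) * (Lnorm q (annulus R) B) powr (q / (q - 3))"
          using part1_lt4[of R s t B q \<delta>] a q True d by blast
        have N: "0 \<le> 1 / (t - s)^2 * R powr (3 - 12 / q) * (Lnorm q (annulus R) B)^4"
          using Lnorm_nonneg[of q "annulus R" B] by simp
        have eq: "Cd q \<delta> * hq q / (t - s) powr ((6 - q) / (q - 3)) * (Lnorm q (annulus R) B) powr (q / (q - 3))
           = Cd q \<delta> / (t - s) powr ((6 - q) / (q - 3)) * (Lnorm q (annulus R) B) powr (q / (q - 3))"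
          unfolding h by simp
        show "J4 s t B \<le> \<delta> * (Lnorm 6 (ball 0 t - ball 0 s) B)^2
                + Cd q \<delta> * hq q / (t - s) powr ((6 - q) / (q - 3))
                    * (Lnorm q (annulus R) B) powr (q / (q - 3))
                + 1 / (t - s)^2 * R powr (3 - 12 / q) * (Lnorm q (annulus R) B)^4"
          using A N eq by linarith
      qed
    qed simp
  next
    case False
    have h: "hq q = 0" using False by (simp add: hq_def)
    show ?thesis
    proof (rule exI[of _ "cvol powr (1 - 4/q)"], intro conjI allI impI)
      show "cvol powr (1 - 4/q) > 0" using cvol_pos by simp
      fix \<delta> :: real assume d: "\<delta> > 0"
      show "\<exists>C\<delta>>0. \<forall>(R::real) s t (B::real^3 \<Rightarrow> real^3).
              R > 0 \<and> sqrt 3 * R \<le> s \<and> s < t \<and> t \<le> 2 * R \<and> smooth B \<longrightarrow>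
              J4 s t B \<le> \<delta> * (Lnorm 6 (ball 0 t - ball 0 s) B)^2
                + C\<delta> * hq q / (t - s) powr ((6 - q) / (q - 3))
                    * (Lnorm q (annulus R) B) powr (q / (q - 3))
                + cvol powr (1 - 4/q) / (t - s)^2 * R powr (3 - 12 / q) * (Lnorm q (annulus R) B)^4"
      proof (rule exI[of _ 1], intro conjI allI impI)
        fix R s t :: real and B :: "real^3 \<Rightarrow> real^3"
        assume a: "R > 0 \<and> sqrt 3 * R \<le> s \<and> s < t \<and> t \<le> 2 * R \<and> smooth B"
        have A: "J4 s t B \<le> cvol powr (1 - 4/q) / (t - s)^2 * R powr (3 - 12/q) * (Lnorm q (annulus R) B)^4"
          using part1_ge4[of R s t B q] a False by simp
        have N: "0 \<le> \<delta> * (Lnorm 6 (ball 0 t - ball 0 s) B)^2" using d by simp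
        have eq: "1 * hq q / (t - s) powr ((6 - q) / (q - 3)) * (Lnorm q (annulus R) B) powr (q / (q - 3)) = 0"
          unfolding h by simp
        show "J4 s t B \<le> \<delta> * (Lnorm 6 (ball 0 t - ball 0 s) B)^2
                + 1 * hq q / (t - s) powr ((6 - q) / (q - 3))
                    * (Lnorm q (annulus R) B) powr (q / (q - 3))
                + cvol powr (1 - 4/q) / (t - s)^2 * R powr (3 - 12 / q) * (Lnorm q (annulus R) B)^4"
          using A N eq by linarith
      qed simp
    qed
  qed
qed

end
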